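(* The Dehn function of $K=\ker\big(\psi\colon F_2^{(a)}\times F_2^{(b)}\times F_2^{(c)}\to\mathbb Z^2\big)$ satisfies $\delta_K(N)\succcurlyeq N^4$.
   Context: $F_2^{(a)},F_2^{(b)},F_2^{(c)}$ are free groups with bases $a_1,a_2$; $b_1,b_2$; $c_1,c_2$, and $\psi$ sends $a_i,b_i,c_i$ to the $i$-th standard basis vector $e_i$; $K$ is finitely presented. The Dehn function of a finitely presented $G=\langle S\mid\mathcal R\rangle$ is $\delta_G(N)=\max\{\mathrm{Area}(w):|w|\le N,\ w=_G1\}$, where $\mathrm{Area}(w)$ is the least number of conjugates of elements of $\mathcal R^{\pm1}$ whose product is $w$ in $F(S)$. For $f,g\colon\mathbb N\to\mathbb N$, $g\succcurlyeq f$ means $f(N)\le Cg(CN+C)+CN+C$ for some $C>0$. *)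

theory Defs
  imports Main
begin

text \<open>A word over an alphabet 'a is a list of letters (x, True) = x and (x, False) = x^-1.\<close>
type_synonym 'a word = "('a \<times> bool) list"

definition letters :: "'a word \<Rightarrow> 'a set" where
  "letters w = fst ` set w"

definition winv :: "'a word \<Rightarrow> 'a word" where
  "winv w = rev (map (\<lambda>(x, b). (x, \<not> b)) w)"

definition free_step :: "'a word \<Rightarrow> 'a word \<Rightarrow> bool" where
  "free_step u v \<longleftrightarrow> (\<exists>p q x b. u = p @ [(x, b), (x, \<not> b)] @ q \<and> v = p @ q)"

definition free_eq :: "'a word \<Rightarrow> 'a word \<Rightarrow> bool" where
  "free_eq = (\<lambda>u v. free_step u v \<or> free_step v u)\<^sup>*\<^sup>*"

definition finite_pres :: "'s set \<Rightarrow> 's word set \<Rightarrow> bool" where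
  "finite_pres S R \<longleftrightarrow> finite S \<and> finite R \<and> (\<forall>r\<in>R. letters r \<subseteq> S)"

definition prod_conj :: "('s word \<times> 's word \<times> bool) list \<Rightarrow> 's word" where
  "prod_conj cs = concat (map (\<lambda>(u, r, e). u @ (if e then r else winv r) @ winv u) cs)"

definition area_witness :: "'s set \<Rightarrow> 's word set \<Rightarrow> 's word \<Rightarrow> ('s word \<times> 's word \<times> bool) list \<Rightarrow> bool" where
  "area_witness S R w cs \<longleftrightarrow>
     (\<forall>(u, r, e) \<in> set cs. r \<in> R \<and> letters u \<subseteq> S) \<and> free_eq (prod_conj cs) w"

definition null_pres :: "'s set \<Rightarrow> 's word set \<Rightarrow> 's word \<Rightarrow> bool" where
  "null_pres S R w \<longleftrightarrow> (\<exists>cs. area_witness S R w cs)"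

definition area :: "'s set \<Rightarrow> 's word set \<Rightarrow> 's word \<Rightarrow> nat" where
  "area S R w = (LEAST n. \<exists>cs. length cs = n \<and> area_witness S R w cs)"

definition dehn :: "'s set \<Rightarrow> 's word set \<Rightarrow> nat \<Rightarrow> nat" where
  "dehn S R N = Max {area S R w | w. letters w \<subseteq> S \<and> length w \<le> N \<and> null_pres S R w}"

definition dehn_dominates :: "(nat \<Rightarrow> nat) \<Rightarrow> (nat \<Rightarrow> nat) \<Rightarrow> bool" where
  "dehn_dominates g f \<longleftrightarrow> (\<exists>C>0. \<forall>N. f N \<le> C * g (C * N + C) + C * N + C)"

datatype gen2 = X1 | X2

text \<open>Element of F_2^(a) x F_2^(b) x F_2^(c), as a triple of words.\<close>
type_synonym triple = "gen2 word \<times> gen2 word \<times> gen2 word"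

definition expsum :: "gen2 \<Rightarrow> gen2 word \<Rightarrow> int" where
  "expsum i w = sum_list (map (\<lambda>(x, b). if x = i then (if b then 1 else -1) else 0) w)"

text \<open>psi(x,y,z) = 0, where psi(a_i)=psi(b_i)=psi(c_i)=e_i.\<close>
definition inK :: "triple \<Rightarrow> bool" where
  "inK t \<longleftrightarrow> (case t of (x, y, z) \<Rightarrow>
     (\<forall>i. expsum i x + expsum i y + expsum i z = 0))"

definition teq :: "triple \<Rightarrow> triple \<Rightarrow> bool" where
  "teq t t' \<longleftrightarrow> (case t of (x, y, z) \<Rightarrow> case t' of (x', y', z') \<Rightarrow>
     free_eq x x' \<and> free_eq y y' \<and> free_eq z z')"

definition tinv :: "triple \<Rightarrow> triple" where
  "tinv t = (case t of (x, y, z) \<Rightarrow> (winv x, winv y, winv z))"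

definition tmul :: "triple \<Rightarrow> triple \<Rightarrow> triple" where
  "tmul t t' = (case t of (x, y, z) \<Rightarrow> case t' of (x', y', z') \<Rightarrow> (x @ x', y @ y', z @ z'))"

definition teval :: "('s \<Rightarrow> triple) \<Rightarrow> 's word \<Rightarrow> triple" where
  "teval \<phi> w = foldr (\<lambda>(s, b) acc. tmul (if b then \<phi> s else tinv (\<phi> s)) acc) w ([], [], [])"

text \<open>phi : S -> K induces an isomorphism <S | R> \<cong> K.\<close>
definition presents_K :: "'s set \<Rightarrow> 's word set \<Rightarrow> ('s \<Rightarrow> triple) \<Rightarrow> bool" where
  "presents_K S R \<phi> \<longleftrightarrow> finite_pres S R
     \<and> (\<forall>s\<in>S. inK (\<phi> s))
     \<and> (\<forall>t. inK t \<longrightarrow> (\<exists>w. letters w \<subseteq> S \<and> teq (teval \<phi> w) t))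
     \<and> (\<forall>w. letters w \<subseteq> S \<longrightarrow> (teq (teval \<phi> w) ([], [], []) \<longleftrightarrow> null_pres S R w))"

end

theory Submission
  imports Defs
begin

datatype col = Ca | Cb | Cc
type_synonym heis = "int \<times> int \<times> int"
type_synonym pos = "heis \<times> heis \<times> heis"
type_synonym step = "col \<times> (gen2 \<times> bool)"

fun hmove :: "heis \<Rightarrow> gen2 \<times> bool \<Rightarrow> heis" where
  "hmove (x1,x2,z) (X1,True) = (x1+1,x2,z)"
| "hmove (x1,x2,z) (X1,False) = (x1-1,x2,z)"
| "hmove (x1,x2,z) (X2,True) = (x1,x2+1,z+x1)"
| "hmove (x1,x2,z) (X2,False) = (x1,x2-1,z-x1)"

definition hword :: "heis \<Rightarrow> gen2 word \<Rightarrow> heis" where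
  "hword h w = foldl hmove h w"

fun getc :: "pos \<Rightarrow> col \<Rightarrow> heis" where
  "getc (pa,pb,pc) Ca = pa" | "getc (pa,pb,pc) Cb = pb" | "getc (pa,pb,pc) Cc = pc"

fun move :: "pos \<Rightarrow> step \<Rightarrow> pos" where
  "move (pa,pb,pc) (Ca,g) = (hmove pa g, pb, pc)"
| "move (pa,pb,pc) (Cb,g) = (pa, hmove pb g, pc)"
| "move (pa,pb,pc) (Cc,g) = (pa, pb, hmove pc g)"

definition pend :: "pos \<Rightarrow> step list \<Rightarrow> pos" where
  "pend p s = foldl move p s"

type_synonym form = "pos \<Rightarrow> col \<Rightarrow> gen2 \<Rightarrow> int"

fun efull :: "form \<Rightarrow> pos \<Rightarrow> step \<Rightarrow> int" where
  "efull e p (c,(g,True)) = e p c g"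
| "efull e p (c,(g,False)) = - e (move p (c,(g,False))) c g"

fun I :: "form \<Rightarrow> pos \<Rightarrow> step list \<Rightarrow> int" where
  "I e p [] = 0"
| "I e p (s # ss) = efull e p s + I e (move p s) ss"

fun sflip :: "step \<Rightarrow> step" where
  "sflip (c,(g,b)) = (c,(g,\<not>b))"

definition sinv :: "step list \<Rightarrow> step list" where
  "sinv ss = rev (map sflip ss)"

definition cmpc :: "col \<Rightarrow> step list \<Rightarrow> gen2 word" where
  "cmpc c ss = map snd (filter (\<lambda>s. fst s = c) ss)"

definition closed :: "form \<Rightarrow> bool" where
  "closed e \<longleftrightarrow> (\<forall>p c d g g'. c \<noteq> d \<longrightarrow>
     e p c g + e (move p (c,(g,True))) d g' = e p d g' + e (move p (d,(g',True))) c g)"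

lemma hmove_inv[simp]: "hmove (hmove h (g,b)) (g,\<not>b) = h"
  by (cases h; cases g; cases b) auto

lemma move_inv[simp]: "move (move p (c,(g,b))) (c,(g,\<not>b)) = p"
  by (cases p; cases c) auto

lemma move_inv'[simp]: "move (move p s) (sflip s) = p"
  by (cases s) auto

lemma move_comm: "fst s \<noteq> fst t \<Longrightarrow> move (move p s) t = move (move p t) s"
  by (cases p; cases s; cases t; cases "fst s"; cases "fst t") auto

lemma pend_simps[simp]: "pend p [] = p" "pend p (s # ss) = pend (move p s) ss"
  "pend p (xs @ ys) = pend (pend p xs) ys"
  by (auto simp: pend_def)

lemma I_append[simp]: "I e p (xs @ ys) = I e p xs + I e (pend p xs) ys"
  by (induction xs arbitrary: p) auto

lemma efull_cancel: "efull e p s + efull e (move p s) (sflip s) = 0"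
proof -
  obtain c g b where s: "s = (c,(g,b))" by (cases s) auto
  show ?thesis
  proof (cases b)
    case True
    have "move (move p (c,(g,True))) (c,(g,False)) = p" using move_inv[of p c g True] by simp
    then show ?thesis using True s by simp
  next
    case False
    then show ?thesis using s by simp
  qed
qed

lemma sinv_simps[simp]: "sinv [] = []" "sinv (s # ss) = sinv ss @ [sflip s]"
  "sinv (xs @ ys) = sinv ys @ sinv xs"
  by (auto simp: sinv_def)

lemma sflip_flip[simp]: "sflip (sflip s) = s"
  by (cases s) auto

lemma sinv_sinv[simp]: "sinv (sinv ss) = ss"
  by (induction ss) auto

lemma pend_sinv[simp]: "pend (pend p ss) (sinv ss) = p"
  by (induction ss arbitrary: p) auto

lemma I_sinv: "I e (pend p ss) (sinv ss) = - I e p ss"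
proof (induction ss arbitrary: p)
  case Nil then show ?case by simp
next
  case (Cons s ss)
  have "I e (pend p (s # ss)) (sinv (s # ss)) = - I e (move p s) ss + efull e (move p s) (sflip s)"
    using Cons by simp
  also have "\<dots> = - I e p (s # ss)" using efull_cancel[of e p s] by simp
  finally show ?case .
qed

lemma I_sinv_cancel: "I e p (ss @ sinv ss @ tt) = I e p tt"
  using I_sinv[of e p ss] by simp

lemma pend_sinv_cancel: "pend p (ss @ sinv ss @ tt) = pend p tt"
  by simp

lemma efull_sq:
  assumes cl: "closed e" and cd: "fst s \<noteq> fst t"
  shows "efull e p s + efull e (move p s) t = efull e p t + efull e (move p t) s"
proof -
  obtain c g b where s: "s = (c,(g,b))" by (cases s) auto
  obtain d g' b' where t: "t = (d,(g',b'))" by (cases t) auto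
  have cd': "c \<noteq> d" using cd s t by simp
  have C: "\<And>q. e q c g + e (move q (c,(g,True))) d g' = e q d g' + e (move q (d,(g',True))) c g"
    using cl cd' unfolding closed_def by blast
  have mc: "\<And>q x y. move (move q (c,x)) (d,y) = move (move q (d,y)) (c,x)"
    using move_comm cd' by (metis fst_conv)
  show ?thesis
  proof (cases b; cases b')
    assume "b" "b'" then show ?thesis using s t C[of p] by simp
  next
    assume b: "b" "\<not> b'"
    let ?q = "move p (d,(g',False))"
    have p: "p = move ?q (d,(g',True))" using move_inv[of p d g' False] by simp
    have "move (move p (c, g, True)) (d, g', False) = move ?q (c,(g,True))"
      using mc by simp
    then show ?thesis using s t b C[of ?q] p by (simp add: algebra_simps)
  next
    assume b: "\<not> b" "b'"
    let ?q = "move p (c,(g,False))"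
    have p: "p = move ?q (c,(g,True))" using move_inv[of p c g False] by simp
    have "move (move p (d, g', True)) (c, g, False) = move ?q (d,(g',True))"
      using mc by simp
    then show ?thesis using s t b C[of ?q] p by (simp add: algebra_simps)
  next
    assume b: "\<not> b" "\<not> b'"
    let ?q = "move (move p (c,(g,False))) (d,(g',False))"
    have q2: "?q = move (move p (d,(g',False))) (c,(g,False))" using mc by simp
    have e1: "move ?q (c,(g,True)) = move p (d,(g',False))"
      using q2 move_inv[of "move p (d,(g',False))" c g False] by simp
    have e2: "move ?q (d,(g',True)) = move p (c,(g,False))"
      using move_inv[of "move p (c,(g,False))" d g' False] by simp
    show ?thesis using s t b C[of ?q] e1 e2 q2 by (simp add: algebra_simps)
  qed
qed

lemma swap_past:
  assumes cl: "closed e" and "\<forall>t\<in>set ts. fst t \<noteq> fst s"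
  shows "I e p (s # ts) = I e p (ts @ [s]) \<and> pend p (s # ts) = pend p (ts @ [s])"
  using assms(2)
proof (induction ts arbitrary: p)
  case Nil then show ?case by simp
next
  case (Cons t ts)
  have ne: "fst s \<noteq> fst t" using Cons.prems by auto
  have IH: "I e (move p t) (s # ts) = I e (move p t) (ts @ [s]) \<and>
            pend (move p t) (s # ts) = pend (move p t) (ts @ [s])"
    using Cons by auto
  have mc: "move (move p s) t = move (move p t) s" using move_comm ne by blast
  have "I e p (s # t # ts) = efull e p s + efull e (move p s) t + I e (move (move p s) t) ts"
    by simp
  also have "\<dots> = efull e p t + (efull e (move p t) s + I e (move (move p t) s) ts)"
    using efull_sq[OF cl ne, of p] mc by simp
  also have "\<dots> = efull e p t + I e (move p t) (s # ts)" by simp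
  also have "\<dots> = I e p ((t # ts) @ [s])" using IH by simp
  finally have 1: "I e p (s # t # ts) = I e p ((t # ts) @ [s])" .
  have "pend p (s # t # ts) = pend (move (move p s) t) ts" by simp
  also have "\<dots> = pend (move p t) (s # ts)" using mc by simp
  also have "\<dots> = pend p ((t # ts) @ [s])" using IH by simp
  finally show ?case using 1 by simp
qed

lemma sort1:
  assumes cl: "closed e"
  shows "I e p ss = I e p (filter (\<lambda>s. fst s = c) ss @ filter (\<lambda>s. fst s \<noteq> c) ss)
       \<and> pend p ss = pend p (filter (\<lambda>s. fst s = c) ss @ filter (\<lambda>s. fst s \<noteq> c) ss)"
proof (induction ss arbitrary: p)
  case Nil then show ?case by simp
next
  case (Cons s ss)
  show ?case
  proof (cases "fst s = c")
    case True then show ?thesis using Cons[of "move p s"] by simp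
  next
    case False
    let ?A = "filter (\<lambda>s. fst s = c) ss" and ?B = "filter (\<lambda>s. fst s \<noteq> c) ss"
    have all: "\<forall>t\<in>set ?A. fst t \<noteq> fst s" using False by auto
    have sw: "I e p (s # ?A) = I e p (?A @ [s]) \<and> pend p (s # ?A) = pend p (?A @ [s])"
      using swap_past[OF cl all] by blast
    have "I e p (s # ss) = efull e p s + I e (move p s) (?A @ ?B)" using Cons[of "move p s"] by simp
    also have "\<dots> = I e p (s # ?A) + I e (pend p (s # ?A)) ?B" by simp
    also have "\<dots> = I e p (?A @ [s]) + I e (pend p (?A @ [s])) ?B" using sw by simp
    finally have 1: "I e p (s # ss) = I e p (?A @ s # ?B)" by simp
    have "pend p (s # ss) = pend (pend p (s # ?A)) ?B" using Cons[of "move p s"] by simp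
    also have "\<dots> = pend p (?A @ s # ?B)" using sw by simp
    finally show ?thesis using 1 False by simp
  qed
qed

lemma cmpc_simps[simp]: "cmpc c [] = []" "cmpc c (xs @ ys) = cmpc c xs @ cmpc c ys"
  "cmpc c (s # ss) = (if fst s = c then snd s # cmpc c ss else cmpc c ss)"
  by (auto simp: cmpc_def)

lemma filter_eq_comp: "filter (\<lambda>s. fst s = c) ss = map (Pair c) (cmpc c ss)"
  by (induction ss) auto

lemma sort3:
  assumes cl: "closed e"
  shows "I e p ss = I e p (map (Pair Ca) (cmpc Ca ss) @ map (Pair Cb) (cmpc Cb ss) @ map (Pair Cc) (cmpc Cc ss))"
proof -
  let ?R = "filter (\<lambda>s. fst s \<noteq> Ca) ss"
  have 1: "I e p ss = I e p (map (Pair Ca) (cmpc Ca ss)) + I e (pend p (map (Pair Ca) (cmpc Ca ss))) ?R"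
    using sort1[OF cl, of p ss Ca] by (simp add: filter_eq_comp)
  have 2: "\<And>q. I e q ?R = I e q (filter (\<lambda>s. fst s = Cb) ?R @ filter (\<lambda>s. fst s \<noteq> Cb) ?R)"
    using sort1[OF cl] by blast
  have f1: "filter (\<lambda>s. fst s = Cb) ?R = map (Pair Cb) (cmpc Cb ss)"
    unfolding filter_filter filter_eq_comp[symmetric] by (rule filter_cong) auto
  have f2: "filter (\<lambda>s. fst s \<noteq> Cb) ?R = map (Pair Cc) (cmpc Cc ss)"
    unfolding filter_filter filter_eq_comp[symmetric]
  proof (rule filter_cong)
    fix x :: step show "(fst x \<noteq> Ca \<and> fst x \<noteq> Cb) = (fst x = Cc)" by (cases "fst x") auto
  qed simp
  show ?thesis using 1 2 f1 f2 by simp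
qed

lemma hword_simps[simp]: "hword h [] = h" "hword h (x # xs) = hword (hmove h x) xs"
  "hword h (xs @ ys) = hword (hword h xs) ys"
  by (auto simp: hword_def)

lemma getc_move: "getc (move p (d,g)) c = (if c = d then hmove (getc p c) g else getc p c)"
  by (cases p; cases c; cases d) auto

lemma getc_pend: "getc (pend p ss) c = hword (getc p c) (cmpc c ss)"
  by (induction ss arbitrary: p) (auto simp: getc_move split: prod.splits)

lemma pos_eq: "(\<forall>c. getc p c = getc q c) \<Longrightarrow> p = q"
  by (cases p; cases q) (metis getc.simps)

lemma free_step_inv:
  assumes "free_step u v"
  shows "I e p (map (Pair c) u) = I e p (map (Pair c) v) \<and> pend p (map (Pair c) u) = pend p (map (Pair c) v)"
proof -
  obtain P Q x b where u: "u = P @ [(x, b), (x, \<not> b)] @ Q" and v: "v = P @ Q"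
    using assms unfolding free_step_def by blast
  let ?q = "pend p (map (Pair c) P)"
  have mm: "move (move ?q (c,(x,b))) (c,(x,\<not>b)) = ?q" by simp
  have ec: "efull e ?q (c,(x,b)) + efull e (move ?q (c,(x,b))) (c,(x,\<not>b)) = 0"
    using efull_cancel[of e ?q "(c,(x,b))"] by simp
  show ?thesis using u v mm ec by simp
qed

lemma free_eq_inv:
  assumes "free_eq u v"
  shows "I e p (map (Pair c) u) = I e p (map (Pair c) v) \<and> pend p (map (Pair c) u) = pend p (map (Pair c) v)"
  using assms unfolding free_eq_def
proof (induction rule: rtranclp_induct)
  case base then show ?case by simp
next
  case (step y z)
  then show ?case using free_step_inv[of y z e p c] free_step_inv[of z y e p c] by metis
qed

lemma path_indep:
  assumes cl: "closed e" and fe: "\<forall>c. free_eq (cmpc c ss) (cmpc c tt)"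
  shows "I e p ss = I e p tt"
proof -
  have A: "I e q (map (Pair c) (cmpc c ss)) = I e q (map (Pair c) (cmpc c tt)) \<and>
           pend q (map (Pair c) (cmpc c ss)) = pend q (map (Pair c) (cmpc c tt))" for q c
    using free_eq_inv fe by blast
  show ?thesis using sort3[OF cl, of p ss] sort3[OF cl, of p tt] A by simp
qed

fun hmul :: "heis \<Rightarrow> heis \<Rightarrow> heis" where
  "hmul (t1,t2,tz) (x1,x2,z) = (t1+x1, t2+x2, tz+z+t1*x2)"

fun lmul :: "pos \<Rightarrow> pos \<Rightarrow> pos" where
  "lmul (ta,tb,tc) (pa,pb,pc) = (hmul ta pa, hmul tb pb, hmul tc pc)"

lemma hmove_hmul: "hmove (hmul t h) g = hmul t (hmove h g)"
  by (cases t; cases h; cases g; cases "fst g"; cases "snd g") (auto simp: algebra_simps)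

lemma move_lmul: "move (lmul t p) s = lmul t (move p s)"
  by (cases t; cases p; cases s; cases "fst s") (auto simp del: hmul.simps simp: hmove_hmul)

lemma efull_lmul: "efull e (lmul t p) s = efull (\<lambda>q. e (lmul t q)) p s"
  by (cases s; cases "snd (snd s)") (auto simp: move_lmul)

lemma I_lmul: "I e (lmul t p) ss = I (\<lambda>q. e (lmul t q)) p ss"
  by (induction ss arbitrary: p) (auto simp: efull_lmul move_lmul)

lemma efull_diff: "efull (\<lambda>q c g. e1 q c g - e2 q c g) p s = efull e1 p s - efull e2 p s"
  by (cases s; cases "snd (snd s)") auto

lemma I_diff: "I (\<lambda>q c g. e1 q c g - e2 q c g) p ss = I e1 p ss - I e2 p ss"
  by (induction ss arbitrary: p) (auto simp: efull_diff)

definition eta :: form where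
  "eta p col g = (case p of ((a1,a2,A),(b1,b2,B),(c1,c2,C)) \<Rightarrow>
     (case (col,g) of
       (Ca,X2) \<Rightarrow> -2*a1*a2*c1 - a1*a1*b2
     | (Cb,X2) \<Rightarrow> 2*b1*b2*c1 - A + 2*A*c1 + 2*A*b1 - a2*c1 + a2*c1*c1 - a2*b1 + 2*a2*b1*c1 + a2*b1*b1
     | (Cc,X1) \<Rightarrow> -2*B*c2 - b1*c2 + b1*c2*c2 - b1*b2 + 2*b1*b2*c2 + b1*b2*b2 + 2*A*c2 + 2*A*b2
        - a2*c1 + 2*a2*c1*c2 + 2*a2*b2*c1 - a2*b1 + 2*a2*b1*c2 + 2*a2*b1*b2 + a2*a2*c1 + a2*a2*b1
     | _ \<Rightarrow> 0))"

fun hval :: "pos \<Rightarrow> int \<times> int" where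
  "hval ((a1,a2,A),(b1,b2,B),(c1,c2,C)) = (a1+b1+c1, a2+b2+c2)"

definition Wf :: "int \<times> int \<Rightarrow> col \<Rightarrow> gen2 \<Rightarrow> col \<Rightarrow> gen2 \<Rightarrow> int" where
  "Wf h c g d g' = (case h of (h1,h2) \<Rightarrow> (case (c,g,d,g') of
      (Ca,X2,Cb,X2) \<Rightarrow> h1*(h1-1) | (Cb,X2,Ca,X2) \<Rightarrow> - (h1*(h1-1))
    | (Ca,X2,Cc,X1) \<Rightarrow> 2*h1*h2 | (Cc,X1,Ca,X2) \<Rightarrow> - (2*h1*h2)
    | (Cb,X1,Cc,X1) \<Rightarrow> h2*(h2-1) | (Cc,X1,Cb,X1) \<Rightarrow> - (h2*(h2-1))
    | _ \<Rightarrow> 0))"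

lemma eta_defect:
  assumes "c \<noteq> d"
  shows "eta p c g + eta (move p (c,(g,True))) d g' - eta p d g' - eta (move p (d,(g',True))) c g
         = Wf (hval p) c g d g'"
proof -
  obtain a1 a2 A b1 b2 B c1 c2 C where p: "p = ((a1,a2,A),(b1,b2,B),(c1,c2,C))"
    by (cases p) auto
  show ?thesis using assms unfolding p
    by (cases c; cases d; cases g; cases g') (simp_all add: eta_def Wf_def algebra_simps)
qed

definition theta :: "pos \<Rightarrow> form" where
  "theta t = (\<lambda>q c g. eta (lmul t q) c g - eta q c g)"

lemma hval_lmul: "hval t = (0,0) \<Longrightarrow> hval (lmul t p) = hval p"
  by (cases t; cases p) auto

lemma theta_closed:
  assumes "hval t = (0,0)"
  shows "closed (theta t)"
  unfolding closed_def
proof (intro allI impI)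
  fix p c d g g' assume cd: "(c::col) \<noteq> d"
  have 1: "eta (lmul t p) c g + eta (lmul t (move p (c,(g,True)))) d g' - eta (lmul t p) d g'
          - eta (lmul t (move p (d,(g',True)))) c g = Wf (hval p) c g d g'"
    using eta_defect[OF cd, of "lmul t p" g g'] hval_lmul[OF assms, of p] by (simp add: move_lmul)
  have 2: "eta p c g + eta (move p (c,(g,True))) d g' - eta p d g' - eta (move p (d,(g',True))) c g
         = Wf (hval p) c g d g'"
    using eta_defect[OF cd] by blast
  show "theta t p c g + theta t (move p (c, g, True)) d g' =
        theta t p d g' + theta t (move p (d, g', True)) c g"
    using 1 2 unfolding theta_def by linarith
qed

definition Orig :: pos where "Orig = ((0,0,0),(0,0,0),(0,0,0))"

lemma lmul_O: "lmul t Orig = t"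
  by (cases t) (auto simp: Orig_def)

lemma relator_inv:
  assumes "hval t = (0,0)" and "\<forall>c. free_eq (cmpc c ss) []"
  shows "I eta (lmul t p) ss = I eta p ss"
proof -
  have "I eta (lmul t p) ss - I eta p ss = I (theta t) p ss"
    unfolding theta_def by (simp add: I_lmul I_diff)
  also have "\<dots> = I (theta t) p []"
    by (rule path_indep[OF theta_closed[OF assms(1)]]) (use assms(2) in simp)
  finally show ?thesis by simp
qed



lemma free_eq_refl[simp]: "free_eq x x"
  unfolding free_eq_def by simp

lemma free_eq_sym: "free_eq x y \<Longrightarrow> free_eq y x"
  unfolding free_eq_def
proof (induction rule: rtranclp_induct)
  case base then show ?case by simp
next
  case (step y z)
  then show ?case by (metis (mono_tags, lifting) converse_rtranclp_into_rtranclp)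
qed

lemma free_eq_trans: "free_eq x y \<Longrightarrow> free_eq y z \<Longrightarrow> free_eq x z"
  unfolding free_eq_def by simp

lemma free_step_ctx: "free_step u v \<Longrightarrow> free_step (p @ u @ q) (p @ v @ q)"
  unfolding free_step_def by (metis append.assoc)

lemma free_eq_ctx: "free_eq u v \<Longrightarrow> free_eq (p @ u @ q) (p @ v @ q)"
  unfolding free_eq_def
proof (induction rule: rtranclp_induct)
  case base then show ?case by simp
next
  case (step y z)
  then show ?case using free_step_ctx by (metis (mono_tags, lifting) rtranclp.simps)
qed

lemma free_eq_append: "free_eq x x' \<Longrightarrow> free_eq y y' \<Longrightarrow> free_eq (x @ y) (x' @ y')"
  using free_eq_ctx[of x x' "[]" y] free_eq_ctx[of y y' x' "[]"] free_eq_trans by simp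

lemma winv_simps[simp]: "winv [] = []" "winv (x # xs) = winv xs @ [(fst x, \<not> snd x)]"
  "winv (xs @ ys) = winv ys @ winv xs"
  by (auto simp: winv_def split: prod.splits)

lemma winv_winv[simp]: "winv (winv x) = x"
  by (induction x) auto

lemma free_step_winv: "free_step u v \<Longrightarrow> free_step (winv u) (winv v)"
proof -
  assume "free_step u v"
  then obtain P Q x b where u: "u = P @ [(x, b), (x, \<not> b)] @ Q" and v: "v = P @ Q"
    unfolding free_step_def by blast
  have "winv u = winv Q @ [(x, b), (x, \<not>b)] @ winv P" using u by simp
  moreover have "winv v = winv Q @ winv P" using v by simp
  ultimately show ?thesis unfolding free_step_def by blast
qed

lemma free_eq_winv: "free_eq u v \<Longrightarrow> free_eq (winv u) (winv v)"
  unfolding free_eq_def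
proof (induction rule: rtranclp_induct)
  case base then show ?case by simp
next
  case (step y z)
  then show ?case using free_step_winv by (metis (mono_tags, lifting) rtranclp.simps)
qed

lemma free_eq_cancel: "free_eq (x @ winv x) []"
proof (induction x)
  case Nil then show ?case by simp
next
  case (Cons a x)
  obtain g b where a: "a = (g,b)" by (cases a)
  have 1: "free_eq ([a] @ (x @ winv x) @ [(g, \<not>b)]) ([a] @ [] @ [(g, \<not>b)])"
    by (rule free_eq_ctx[OF Cons])
  have "free_step ([a] @ [] @ [(g, \<not>b)]) []"
    unfolding free_step_def a by (rule exI[of _ "[]"], rule exI[of _ "[]"]) auto
  then have 2: "free_eq ([a] @ [] @ [(g, \<not>b)]) []" unfolding free_eq_def by auto
  show ?case using free_eq_trans[OF 1 2] a by simp
qed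

lemma free_eq_cancel': "free_eq (winv x @ x) []"
  using free_eq_cancel[of "winv x"] by simp

definition spath :: "('s \<Rightarrow> triple) \<Rightarrow> 's \<times> bool \<Rightarrow> step list" where
  "spath \<phi> sb = (case sb of (s,b) \<Rightarrow> (case \<phi> s of (x,y,z) \<Rightarrow>
     (if b then map (Pair Ca) x @ map (Pair Cb) y @ map (Pair Cc) z
      else sinv (map (Pair Ca) x @ map (Pair Cb) y @ map (Pair Cc) z))))"

definition path :: "('s \<Rightarrow> triple) \<Rightarrow> 's word \<Rightarrow> step list" where
  "path \<phi> w = concat (map (spath \<phi>) w)"

fun tc :: "col \<Rightarrow> triple \<Rightarrow> gen2 word" where
  "tc Ca (x,y,z) = x" | "tc Cb (x,y,z) = y" | "tc Cc (x,y,z) = z"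

lemma path_simps[simp]: "path \<phi> [] = []" "path \<phi> (x # w) = spath \<phi> x @ path \<phi> w"
  "path \<phi> (v @ w) = path \<phi> v @ path \<phi> w"
  by (auto simp: path_def)

lemma spath_flip: "spath \<phi> (s, \<not> b) = sinv (spath \<phi> (s, b))"
  by (cases "\<phi> s") (auto simp: spath_def)

lemma path_winv: "path \<phi> (winv w) = sinv (path \<phi> w)"
proof (induction w)
  case Nil then show ?case by simp
next
  case (Cons a w)
  obtain s b where a: "a = (s,b)" by (cases a)
  show ?case using Cons a spath_flip[of \<phi> s b] by simp
qed

lemma cmpc_flip: "cmpc c (map sflip ss) = map (\<lambda>(x,b). (x, \<not> b)) (cmpc c ss)"
  by (induction ss) (auto split: prod.splits)

lemma cmpc_sinv: "cmpc c (sinv ss) = winv (cmpc c ss)"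
proof (induction ss)
  case Nil then show ?case by simp
next
  case (Cons s ss)
  obtain d g b where s: "s = (d,(g,b))" by (cases s) auto
  show ?case using Cons s by simp
qed

lemma cmpc_tag: "cmpc c (map (Pair d) x) = (if c = d then x else [])"
  by (induction x) auto

lemma cmpc_spath_T: "cmpc c (spath \<phi> (s,True)) = tc c (\<phi> s)"
  by (cases "\<phi> s"; cases c) (auto simp: spath_def cmpc_tag)

lemma tc_tmul: "tc c (tmul t t') = tc c t @ tc c t'"
  by (cases t; cases t'; cases c) (auto simp: tmul_def)

lemma tc_tinv: "tc c (tinv t) = winv (tc c t)"
  by (cases t; cases c) (auto simp: tinv_def)

lemma teval_simps[simp]: "teval \<phi> [] = ([],[],[])"
  "teval \<phi> ((s,b) # w) = tmul (if b then \<phi> s else tinv (\<phi> s)) (teval \<phi> w)"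
  by (auto simp: teval_def)

lemma cmpc_path_teval: "cmpc c (path \<phi> w) = tc c (teval \<phi> w)"
proof (induction w)
  case Nil then show ?case by (cases c) auto
next
  case (Cons a w)
  obtain s b where a: "a = (s,b)" by (cases a)
  show ?case
  proof (cases b)
    case True then show ?thesis using Cons a by (simp add: cmpc_spath_T tc_tmul)
  next
    case False
    have "spath \<phi> (s,b) = sinv (spath \<phi> (s,True))" using spath_flip[of \<phi> s True] False by simp
    then show ?thesis using Cons a False by (simp add: cmpc_sinv cmpc_spath_T tc_tmul tc_tinv)
  qed
qed

lemma expsum_simps[simp]: "expsum i [] = 0" "expsum i (xs @ ys) = expsum i xs + expsum i ys"
  "expsum i (x # xs) = (if fst x = i then (if snd x then 1 else -1) else 0) + expsum i xs"
  by (auto simp: expsum_def split: prod.splits)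

lemma expsum_winv[simp]: "expsum i (winv x) = - expsum i x"
  by (induction x) auto

lemma hword_fst: "fst (hword h w) = fst h + expsum X1 w \<and> fst (snd (hword h w)) = fst (snd h) + expsum X2 w"
proof (induction w arbitrary: h)
  case Nil then show ?case by simp
next
  case (Cons a w)
  obtain x1 x2 z where h: "h = (x1,x2,z)" by (cases h)
  obtain g b where a: "a = (g,b)" by (cases a)
  show ?case using Cons[of "hmove h a"] unfolding h a by (cases g; cases b) auto
qed

lemma hval_getc: "hval p = (fst (getc p Ca) + fst (getc p Cb) + fst (getc p Cc),
   fst (snd (getc p Ca)) + fst (snd (getc p Cb)) + fst (snd (getc p Cc)))"
  by (cases p) auto

lemma inK_path:
  assumes S: "\<forall>s\<in>S. inK (\<phi> s)" and w: "letters w \<subseteq> S"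
  shows "expsum i (cmpc Ca (path \<phi> w)) + expsum i (cmpc Cb (path \<phi> w)) + expsum i (cmpc Cc (path \<phi> w)) = 0"
  using w
proof (induction w)
  case Nil then show ?case by simp
next
  case (Cons a w)
  obtain s b where a: "a = (s,b)" by (cases a)
  have sS: "s \<in> S" and wS: "letters w \<subseteq> S" using Cons.prems a by (auto simp: letters_def)
  obtain x y z where ph: "\<phi> s = (x,y,z)" by (cases "\<phi> s")
  have k: "expsum i x + expsum i y + expsum i z = 0" using S sS ph by (auto simp: inK_def)
  have sp: "spath \<phi> (s,b) = (if b then spath \<phi> (s,True) else sinv (spath \<phi> (s,True)))"
    using spath_flip[of \<phi> s True] by (cases b) auto
  show ?case using Cons.IH[OF wS] k sp ph a
    by (cases b) (auto simp: cmpc_sinv cmpc_spath_T)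
qed

lemma hval_path:
  assumes S: "\<forall>s\<in>S. inK (\<phi> s)" and w: "letters w \<subseteq> S"
  shows "hval (pend Orig (path \<phi> w)) = (0,0)"
  using inK_path[OF S w, of X1] inK_path[OF S w, of X2]
  unfolding hval_getc getc_pend using hword_fst
  by (simp add: Orig_def)

lemma hword_free_eq: "free_eq x y \<Longrightarrow> hword h x = hword h y"
proof -
  assume "free_eq x y"
  then have "pend (h,h,h) (map (Pair Ca) x) = pend (h,h,h) (map (Pair Ca) y)"
    using free_eq_inv[of x y eta] by blast
  then have "getc (pend (h,h,h) (map (Pair Ca) x)) Ca = getc (pend (h,h,h) (map (Pair Ca) y)) Ca" by simp
  then show ?thesis unfolding getc_pend cmpc_tag by simp
qed

lemma path_free_step: "free_step w w' \<Longrightarrow> I e p (path \<phi> w) = I e p (path \<phi> w') \<and> pend p (path \<phi> w) = pend p (path \<phi> w')"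
proof -
  assume "free_step w w'"
  then obtain P Q s b where u: "w = P @ [(s, b), (s, \<not> b)] @ Q" and v: "w' = P @ Q"
    unfolding free_step_def by blast
  have "path \<phi> w = path \<phi> P @ spath \<phi> (s,b) @ sinv (spath \<phi> (s,b)) @ path \<phi> Q"
    using u spath_flip[of \<phi> s b] by simp
  then show ?thesis using v I_sinv_cancel by simp
qed

lemma path_free_eq: "free_eq w w' \<Longrightarrow> I e p (path \<phi> w) = I e p (path \<phi> w') \<and> pend p (path \<phi> w) = pend p (path \<phi> w')"
  unfolding free_eq_def
proof (induction rule: rtranclp_induct)
  case base then show ?case by simp
next
  case (step y z)
  then show ?case using path_free_step[of y z e p \<phi>] path_free_step[of z y e p \<phi>] by metis
qed

definition J :: "('s \<Rightarrow> triple) \<Rightarrow> 's word \<Rightarrow> int" where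
  "J \<phi> w = I eta Orig (path \<phi> w)"

lemma pend_null:
  assumes "\<forall>c. free_eq (cmpc c ss) []"
  shows "pend p ss = p"
proof (rule pos_eq, rule allI)
  fix c
  have "hword (getc p c) (cmpc c ss) = hword (getc p c) []"
    using hword_free_eq assms by blast
  then show "getc (pend p ss) c = getc p c" by (simp add: getc_pend)
qed

lemma J_prod_conj:
  assumes S: "\<forall>s\<in>S. inK (\<phi> s)"
    and R: "\<forall>r\<in>R. \<forall>c. free_eq (cmpc c (path \<phi> r)) []"
    and cs: "\<forall>(u, r, e) \<in> set cs. r \<in> R \<and> letters u \<subseteq> S"
  shows "I eta Orig (path \<phi> (prod_conj cs)) = (\<Sum>(u,r,e)\<leftarrow>cs. if e then J \<phi> r else - J \<phi> r)
       \<and> pend Orig (path \<phi> (prod_conj cs)) = Orig"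
  using cs
proof (induction cs)
  case Nil then show ?case by (simp add: prod_conj_def)
next
  case (Cons a cs)
  obtain u r e where a: "a = (u,r,e)" by (cases a)
  have rR: "r \<in> R" and uS: "letters u \<subseteq> S" using Cons.prems a by auto
  have IH: "I eta Orig (path \<phi> (prod_conj cs)) = (\<Sum>(u,r,e)\<leftarrow>cs. if e then J \<phi> r else - J \<phi> r)
       \<and> pend Orig (path \<phi> (prod_conj cs)) = Orig" using Cons by auto
  have pc: "prod_conj (a # cs) = u @ (if e then r else winv r) @ winv u @ prod_conj cs"
    using a by (simp add: prod_conj_def)
  let ?r = "path \<phi> (if e then r else winv r)"
  have rnull: "\<forall>c. free_eq (cmpc c ?r) []"
  proof
    fix c
    show "free_eq (cmpc c ?r) []"
    proof (cases e)
      case True then show ?thesis using R rR by simp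
    next
      case False
      have "free_eq (winv (cmpc c (path \<phi> r))) (winv [])" using R rR free_eq_winv by blast
      then show ?thesis using False by (simp add: path_winv cmpc_sinv)
    qed
  qed
  have Jr: "I eta Orig ?r = (if e then J \<phi> r else - J \<phi> r)"
  proof (cases e)
    case True then show ?thesis by (simp add: J_def)
  next
    case False
    have po: "pend Orig (path \<phi> r) = Orig" using pend_null R rR by blast
    have "I eta Orig (sinv (path \<phi> r)) = - J \<phi> r"
      using I_sinv[of eta Orig "path \<phi> r"] po by (simp add: J_def)
    then show ?thesis using False by (simp add: path_winv)
  qed
  let ?q = "pend Orig (path \<phi> u)"
  have hq: "hval ?q = (0,0)" using hval_path[OF S uS] .
  have pq: "pend ?q ?r = ?q" using pend_null[OF rnull] .
  have Iq: "I eta ?q ?r = I eta Orig ?r"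
    using relator_inv[OF hq rnull, of Orig] by (simp add: lmul_O)
  have Iu: "I eta ?q (sinv (path \<phi> u)) = - I eta Orig (path \<phi> u)" by (rule I_sinv)
  have pu: "pend ?q (sinv (path \<phi> u)) = Orig" by simp
  show ?case using IH pc Jr pq Iq Iu pu a by (simp add: path_winv)
qed

definition wpow :: "'a list \<Rightarrow> nat \<Rightarrow> 'a list" where
  "wpow x n = concat (replicate n x)"

definition comm :: "'a word \<Rightarrow> 'a word \<Rightarrow> 'a word" where
  "comm x y = x @ y @ winv x @ winv y"

lemma wpow_simps[simp]: "wpow x 0 = []" "wpow x (Suc n) = x @ wpow x n"
  by (auto simp: wpow_def)

lemma wpow_single: "wpow [a] n = replicate n a"
  by (induction n) auto

lemma wpow_nil: "wpow [] n = []"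
  by (induction n) auto

lemma length_wpow: "length (wpow x n) = n * length x"
  by (induction n) auto

lemma letters_append: "letters (x @ y) = letters x \<union> letters y"
  by (auto simp: letters_def)

lemma letters_winv: "letters (winv x) = letters x"
  by (induction x) (auto simp: letters_def)

lemma letters_wpow: "letters (wpow x n) \<subseteq> letters x"
  by (induction n) (auto simp: letters_append letters_def)

lemma letters_comm: "letters (comm x y) = letters x \<union> letters y"
  by (auto simp: comm_def letters_append letters_winv)

lemma length_winv: "length (winv x) = length x"
  by (simp add: winv_def)

lemma length_comm: "length (comm x y) = 2 * length x + 2 * length y"
  by (simp add: comm_def length_winv)

lemma path_wpow: "path \<phi> (wpow x n) = wpow (path \<phi> x) n"
  by (induction n) auto

lemma cmpc_wpow: "cmpc c (wpow x n) = wpow (cmpc c x) n"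
  by (induction n) auto

lemma gc_comm: "cmpc c (path \<phi> (comm x y)) = comm (cmpc c (path \<phi> x)) (cmpc c (path \<phi> y))"
  by (simp add: comm_def path_winv cmpc_sinv)

lemma gc_wpow: "cmpc c (path \<phi> (wpow x n)) = wpow (cmpc c (path \<phi> x)) n"
  by (simp add: path_wpow cmpc_wpow)

lemma free_eq_wpow: "free_eq x x' \<Longrightarrow> free_eq (wpow x n) (wpow x' n)"
  by (induction n) (auto intro: free_eq_append)

lemma free_eq_comm: "free_eq x x' \<Longrightarrow> free_eq y y' \<Longrightarrow> free_eq (comm x y) (comm x' y')"
  unfolding comm_def by (intro free_eq_append free_eq_winv) auto

lemma comm_nil1: "free_eq (comm x []) []"
  unfolding comm_def using free_eq_cancel by simp

lemma comm_nil2: "free_eq (comm [] y) []"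
  unfolding comm_def using free_eq_cancel by simp

lemma teq_tc: "teq t t' \<longleftrightarrow> (\<forall>c. free_eq (tc c t) (tc c t'))"
proof -
  obtain x y z where t: "t = (x,y,z)" by (cases t)
  obtain x' y' z' where t': "t' = (x',y',z')" by (cases t')
  have 1: "(\<forall>c. free_eq (tc c t) (tc c t')) \<Longrightarrow> teq t t'"
  proof -
    assume a: "\<forall>c. free_eq (tc c t) (tc c t')"
    show ?thesis using a[rule_format, of Ca] a[rule_format, of Cb] a[rule_format, of Cc]
      unfolding t t' teq_def by simp
  qed
  have 2: "teq t t' \<Longrightarrow> free_eq (tc c t) (tc c t')" for c
    unfolding t t' teq_def by (cases c) simp_all
  show ?thesis using 1 2 by blast
qed

definition Qw :: "nat \<Rightarrow> gen2 word" where
  "Qw n = comm (replicate n (X1,True)) (replicate n (X2,True))"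

lemma winv_rep: "winv (replicate n (g,b)) = replicate n (g, \<not> b)"
  by (induction n) (auto simp: replicate_append_same)

lemma hword_rep1: "hword (x1,x2,z) (replicate n (X1,b)) = (x1 + (if b then int n else - int n), x2, z)"
  by (induction n arbitrary: x1) (auto simp: algebra_simps)

lemma hword_rep2: "hword (x1,x2,z) (replicate n (X2,b)) = (x1, x2 + (if b then int n else - int n), z + (if b then int n * x1 else - int n * x1))"
  by (induction n arbitrary: x2 z) (auto simp: algebra_simps)

lemma hword_Qw: "hword (x1,x2,z) (Qw n) = (x1, x2, z + int n * int n)"
  unfolding Qw_def comm_def winv_rep by (simp add: hword_rep1 hword_rep2 algebra_simps)

lemma pend_repB1: "pend (pa,(x1,x2,z),pc) (replicate n (Cb,(X1,b))) = (pa,(x1 + (if b then int n else - int n), x2, z),pc)"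
  by (induction n arbitrary: x1) (auto simp: algebra_simps)

lemma pend_repB2: "pend (pa,(x1,x2,z),pc) (replicate n (Cb,(X2,b))) = (pa,(x1, x2 + (if b then int n else - int n), z + (if b then int n * x1 else - int n * x1)),pc)"
  by (induction n arbitrary: x2 z) (auto simp: algebra_simps)

lemma theta_U:
  "theta ((0,0,N),(0,0,0),(0,0,0)) ((a1,a2,A),(b1,b2,B),(c1,c2,C)) c g =
    (case (c,g) of (Cb,X2) \<Rightarrow> N*(2*b1+2*c1-1) | (Cc,X1) \<Rightarrow> 2*N*(c2+b2) | _ \<Rightarrow> 0)"
  by (cases c; cases g) (simp_all add: theta_def eta_def algebra_simps)

lemma theta_V: "theta ((0,0,0),(0,0,N),(0,0,0)) q Ca g = 0"
  by (cases q; cases g) (auto simp: theta_def eta_def)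

lemma I_zeroA: 
  assumes z: "\<forall>q g. e q Ca g = 0"
  shows "I e p (map (Pair Ca) w) = 0"
proof (induction w arbitrary: p)
  case Nil then show ?case by simp
next
  case (Cons a w)
  obtain g b where a: "a = (g,b)" by (cases a)
  have z1: "e p Ca g = 0" "e (move p (Ca,(g,False))) Ca g = 0" using z by blast+
  have "efull e p (Ca, a) = 0" using z1 unfolding a by (cases b) simp_all
  then show ?case using Cons.IH by simp
qed

lemma I_U_seg1: "I (theta ((0,0,N),(0,0,0),(0,0,0))) (pa,(x1,x2,z),(c1,c2,C)) (replicate n (Cb,(X1,b))) = 0"
proof (induction n arbitrary: x1)
  case 0 then show ?case by simp
next
  case (Suc n)
  obtain a1 a2 A where pa: "pa = (a1,a2,A)" by (cases pa)
  show ?case using Suc[of "x1+1"] Suc[of "x1-1"] unfolding pa by (cases b) (simp_all add: theta_U)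
qed

lemma I_U_seg2: "I (theta ((0,0,N),(0,0,0),(0,0,0))) (pa,(x1,x2,z),(c1,c2,C)) (replicate n (Cb,(X2,b)))
   = (if b then 1 else -1) * int n * N * (2*x1+2*c1-1)"
proof (induction n arbitrary: x2 z)
  case 0 then show ?case by simp
next
  case (Suc n)
  obtain a1 a2 A where pa: "pa = (a1,a2,A)" by (cases pa)
  show ?case using Suc unfolding pa by (cases b) (simp_all add: theta_U algebra_simps)
qed

lemma I_U_total: "I (theta ((0,0,int n * int n),(0,0,0),(0,0,0))) Orig (map (Pair Cb) (Qw n)) = 2 * int n ^ 4"
proof -
  let ?N = "int n * int n"
  let ?T = "theta ((0,0,?N),(0,0,0),(0,0,0))"
  have q: "map (Pair Cb) (Qw n) = replicate n (Cb,(X1,True)) @ replicate n (Cb,(X2,True)) @ replicate n (Cb,(X1,False)) @ replicate n (Cb,(X2,False))"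
    unfolding Qw_def comm_def winv_rep by simp
  have 1: "I ?T ((0,0,0),(0,0,0),(0,0,0)) (replicate n (Cb,(X1,True))) = 0" by (rule I_U_seg1)
  have p1: "pend ((0,0,0),(0,0,0),(0,0,0)) (replicate n (Cb,(X1,True))) = ((0,0,0),(int n,0,0),(0,0,0))"
    using pend_repB1[of "(0,0,0)" 0 0 0 "(0,0,0)" n True] by simp
  have 2: "I ?T ((0,0,0),(int n,0,0),(0,0,0)) (replicate n (Cb,(X2,True))) = int n * ?N * (2 * int n - 1)"
    using I_U_seg2[of ?N "(0,0,0)" "int n" 0 0 0 0 0 n True] by simp
  have p2: "pend ((0,0,0),(int n,0,0),(0,0,0)) (replicate n (Cb,(X2,True))) = ((0,0,0),(int n,int n,?N),(0,0,0))"
    using pend_repB2[of "(0,0,0)" "int n" 0 0 "(0,0,0)" n True] by simp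
  have 3: "I ?T ((0,0,0),(int n,int n,?N),(0,0,0)) (replicate n (Cb,(X1,False))) = 0" by (rule I_U_seg1)
  have p3: "pend ((0,0,0),(int n,int n,?N),(0,0,0)) (replicate n (Cb,(X1,False))) = ((0,0,0),(0,int n,?N),(0,0,0))"
    using pend_repB1[of "(0,0,0)" "int n" "int n" ?N "(0,0,0)" n False] by simp
  have 4: "I ?T ((0,0,0),(0,int n,?N),(0,0,0)) (replicate n (Cb,(X2,False))) = int n * ?N"
    using I_U_seg2[of ?N "(0,0,0)" 0 "int n" ?N 0 0 0 n False] by simp
  show ?thesis unfolding q Orig_def using 1 2 3 4 p1 p2 p3
    by (simp add: algebra_simps power4_eq_xxxx)
qed

lemma sum_bound:
  assumes "\<forall>(u,r,e)\<in>set cs. r \<in> R" and "\<forall>r\<in>R. \<bar>f r\<bar> \<le> M"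
  shows "\<bar>(\<Sum>(u,r,e)\<leftarrow>cs. if e then f r else - f r)\<bar> \<le> int (length cs) * M"
  using assms(1)
proof (induction cs)
  case Nil then show ?case by simp
next
  case (Cons a cs)
  obtain u r e where a: "a = (u,r,e)" by (cases a)
  have "r \<in> R" using Cons.prems a by auto
  then have "\<bar>if e then f r else - f r\<bar> \<le> M" using assms(2) by auto
  moreover have "\<bar>(\<Sum>(u,r,e)\<leftarrow>cs. if e then f r else - f r)\<bar> \<le> int (length cs) * M"
    using Cons by auto
  ultimately show ?case using a by (simp add: algebra_simps)
qed

lemma J_bound:
  assumes S: "\<forall>s\<in>S. inK (\<phi> s)"
    and R: "\<forall>r\<in>R. \<forall>c. free_eq (cmpc c (path \<phi> r)) []"
    and fR: "finite R"
    and aw: "area_witness S R w cs"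
  shows "\<bar>J \<phi> w\<bar> \<le> int (length cs) * (\<Sum>r\<in>R. \<bar>J \<phi> r\<bar>)"
proof -
  have cs: "\<forall>(u, r, e) \<in> set cs. r \<in> R \<and> letters u \<subseteq> S" and fe: "free_eq (prod_conj cs) w"
    using aw unfolding area_witness_def by auto
  have "J \<phi> w = I eta Orig (path \<phi> (prod_conj cs))"
    unfolding J_def using path_free_eq[OF free_eq_sym[OF fe]] by metis
  also have "\<dots> = (\<Sum>(u,r,e)\<leftarrow>cs. if e then J \<phi> r else - J \<phi> r)"
    using J_prod_conj[OF S R cs] by blast
  finally have 1: "J \<phi> w = (\<Sum>(u,r,e)\<leftarrow>cs. if e then J \<phi> r else - J \<phi> r)" .
  have 2: "\<forall>r\<in>R. \<bar>J \<phi> r\<bar> \<le> (\<Sum>r\<in>R. \<bar>J \<phi> r\<bar>)"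
    using member_le_sum[OF _ _ fR] by (metis abs_ge_zero)
  have 3: "\<forall>(u,r,e)\<in>set cs. r \<in> R" using cs by auto
  show ?thesis unfolding 1 by (rule sum_bound[OF 3 2])
qed

lemma pos_getc: "p = (getc p Ca, getc p Cb, getc p Cc)"
  by (cases p) auto

lemma getc_Orig: "getc Orig c = (0,0,0)"
  by (cases c) (auto simp: Orig_def)

lemma tc_zero: "tc c ([],[],[]) = []"
  by (cases c) auto



lemma Jw_value:
  assumes Ua: "free_eq (cmpc Ca (path \<phi> U)) (Qw n)" and Ub: "free_eq (cmpc Cb (path \<phi> U)) []"
    and Uc: "free_eq (cmpc Cc (path \<phi> U)) []"
    and Va: "free_eq (cmpc Ca (path \<phi> V)) []" and Vb: "free_eq (cmpc Cb (path \<phi> V)) (Qw n)"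
    and Vc: "free_eq (cmpc Cc (path \<phi> V)) []"
  shows "J \<phi> (comm U V) = 2 * int n ^ 4"
proof -
  let ?N = "int n * int n"
  let ?PU = "path \<phi> U" and ?PV = "path \<phi> V"
  have hQ: "hword (0,0,0) (Qw n) = (0,0,?N)" using hword_Qw[of 0 0 0 n] by simp
  have hQ': "hword (0,0,?N) (Qw n) = (0,0,?N+?N)" using hword_Qw[of 0 0 ?N n] by simp
  have hf: "\<And>x y h. free_eq x y \<Longrightarrow> hword h x = hword h y" by (rule hword_free_eq)
  define eU where "eU = ((0::int,0::int,?N),(0::int,0::int,0::int),(0::int,0::int,0::int))"
  define eV where "eV = ((0::int,0::int,0::int),(0::int,0::int,?N),(0::int,0::int,0::int))"
  define E where "E = ((0::int,0::int,?N),(0::int,0::int,?N),(0::int,0::int,0::int))"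
  have peU: "pend Orig ?PU = eU"
    by (subst pos_getc) (simp add: getc_pend getc_Orig eU_def hf[OF Ua] hf[OF Ub] hf[OF Uc] hQ)
  have peV: "pend Orig ?PV = eV"
    by (subst pos_getc) (simp add: getc_pend getc_Orig eV_def hf[OF Va] hf[OF Vb] hf[OF Vc] hQ)
  have pE1: "pend eU ?PV = E"
    by (subst pos_getc) (simp add: getc_pend eU_def E_def hf[OF Va] hf[OF Vb] hf[OF Vc] hQ)
  have pE2: "pend eV ?PU = E"
    by (subst pos_getc) (simp add: getc_pend eV_def E_def hf[OF Ua] hf[OF Ub] hf[OF Uc] hQ)
  have path_w: "path \<phi> (comm U V) = ?PU @ ?PV @ sinv ?PU @ sinv ?PV"
    by (simp add: comm_def path_winv)
  have i3: "I eta E (sinv ?PU) = - I eta eV ?PU"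
    using I_sinv[of eta eV ?PU] pE2 by simp
  have p3: "pend E (sinv ?PU) = eV" using pend_sinv[of eV ?PU] pE2 by simp
  have i4: "I eta eV (sinv ?PV) = - I eta Orig ?PV"
    using I_sinv[of eta Orig ?PV] peV by simp
  have J1: "J \<phi> (comm U V) = (I eta eU ?PV - I eta Orig ?PV) - (I eta eV ?PU - I eta Orig ?PU)"
    unfolding J_def path_w using peU pE1 i3 p3 i4 by simp
  have hU: "hval eU = (0,0)" by (simp add: eU_def)
  have hV: "hval eV = (0,0)" by (simp add: eV_def)
  have d1: "I eta eU ?PV - I eta Orig ?PV = I (theta eU) Orig ?PV"
    using lmul_O[of eU] unfolding theta_def by (metis I_lmul I_diff)
  have d2: "I eta eV ?PU - I eta Orig ?PU = I (theta eV) Orig ?PU"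
    using lmul_O[of eV] unfolding theta_def by (metis I_lmul I_diff)
  have cV: "\<forall>c. free_eq (cmpc c ?PV) (cmpc c (map (Pair Cb) (Qw n)))"
  proof
    fix c show "free_eq (cmpc c ?PV) (cmpc c (map (Pair Cb) (Qw n)))"
      using Va Vb Vc by (cases c) (simp_all add: cmpc_tag)
  qed
  have cU: "\<forall>c. free_eq (cmpc c ?PU) (cmpc c (map (Pair Ca) (Qw n)))"
  proof
    fix c show "free_eq (cmpc c ?PU) (cmpc c (map (Pair Ca) (Qw n)))"
      using Ua Ub Uc by (cases c) (simp_all add: cmpc_tag)
  qed
  have e1: "I (theta eU) Orig ?PV = 2 * int n ^ 4"
    using path_indep[OF theta_closed[OF hU] cV, of Orig] I_U_total[of n] unfolding eU_def by simp
  have e2: "I (theta eV) Orig ?PU = 0"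
    using path_indep[OF theta_closed[OF hV] cU, of Orig] I_zeroA[of "theta eV"] theta_V
    unfolding eV_def by simp
  show ?thesis using J1 d1 d2 e1 e2 by simp
qed


lemma inK_simple:
  "inK ([(X1,True)],[(X1,False)],[])" "inK ([(X2,True)],[],[(X2,False)])"
  "inK ([],[(X1,True)],[(X1,False)])" "inK ([(X2,False)],[(X2,True)],[])"
  by (auto simp: inK_def)

lemma finite_dehn_set:
  assumes "finite S"
  shows "finite {area S R w | w. letters w \<subseteq> S \<and> length w \<le> N \<and> null_pres S R w}"
proof -
  have "{w. letters w \<subseteq> S \<and> length w \<le> N \<and> null_pres S R w} \<subseteq> {w. set w \<subseteq> S \<times> UNIV \<and> length w \<le> N}"
    by (auto simp: letters_def)
  moreover have "finite {w. set w \<subseteq> (S \<times> (UNIV :: bool set)) \<and> length w \<le> N}"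
    by (rule finite_lists_length_le) (use assms in simp)
  ultimately have "finite {w. letters w \<subseteq> S \<and> length w \<le> N \<and> null_pres S R w}"
    by (rule finite_subset)
  then have "finite (area S R ` {w. letters w \<subseteq> S \<and> length w \<le> N \<and> null_pres S R w})" by simp
  moreover have "{area S R w | w. letters w \<subseteq> S \<and> length w \<le> N \<and> null_pres S R w}
     = area S R ` {w. letters w \<subseteq> S \<and> length w \<le> N \<and> null_pres S R w}" by auto
  ultimately show ?thesis by simp
qed

lemma area_le_dehn:
  assumes "finite S" "letters w \<subseteq> S" "length w \<le> N" "null_pres S R w"
  shows "area S R w \<le> dehn S R N"
  unfolding dehn_def by (rule Max_ge[OF finite_dehn_set[OF assms(1)]]) (use assms in blast)

lemma area_witness_ex:
  assumes "null_pres S R w"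
  shows "\<exists>cs. length cs = area S R w \<and> area_witness S R w cs"
proof -
  have "\<exists>n cs. length cs = n \<and> area_witness S R w cs" using assms unfolding null_pres_def by blast
  then show ?thesis unfolding area_def by (rule LeastI_ex)
qed

theorem proposition4p16:
  fixes S :: "'s set" and R :: "'s word set" and \<phi> :: "'s \<Rightarrow> triple"
  assumes "presents_K S R \<phi>"
  shows "dehn_dominates (dehn S R) (\<lambda>N. N ^ 4)"
proof -
  have fS: "finite S" and fR: "finite R" and RS: "\<forall>r\<in>R. letters r \<subseteq> S"
    and S: "\<forall>s\<in>S. inK (\<phi> s)"
    and gen: "\<forall>t. inK t \<longrightarrow> (\<exists>w. letters w \<subseteq> S \<and> teq (teval \<phi> w) t)"
    and pres: "\<forall>w. letters w \<subseteq> S \<longrightarrow> (teq (teval \<phi> w) ([], [], []) \<longleftrightarrow> null_pres S R w)"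
    using assms unfolding presents_K_def finite_pres_def by auto
  have Rn: "\<forall>r\<in>R. \<forall>c. free_eq (cmpc c (path \<phi> r)) []"
  proof (intro ballI allI)
    fix r c assume r: "r \<in> R"
    have "area_witness S R r [([], r, True)]"
      using r unfolding area_witness_def prod_conj_def by (simp add: letters_def)
    then have "null_pres S R r" unfolding null_pres_def by blast
    then have "teq (teval \<phi> r) ([], [], [])" using pres RS r by blast
    then show "free_eq (cmpc c (path \<phi> r)) []"
      unfolding teq_tc cmpc_path_teval using tc_zero by metis
  qed
  have teqc: "\<And>w t c. teq (teval \<phi> w) t \<Longrightarrow> free_eq (cmpc c (path \<phi> w)) (tc c t)"
    unfolding teq_tc cmpc_path_teval by blast
  obtain G1 where G1: "letters G1 \<subseteq> S" "teq (teval \<phi> G1) ([(X1,True)],[(X1,False)],[])"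
    using gen inK_simple(1) by blast
  obtain G2 where G2: "letters G2 \<subseteq> S" "teq (teval \<phi> G2) ([(X2,True)],[],[(X2,False)])"
    using gen inK_simple(2) by blast
  obtain H1 where H1: "letters H1 \<subseteq> S" "teq (teval \<phi> H1) ([],[(X1,True)],[(X1,False)])"
    using gen inK_simple(3) by blast
  obtain H2 where H2: "letters H2 \<subseteq> S" "teq (teval \<phi> H2) ([(X2,False)],[(X2,True)],[])"
    using gen inK_simple(4) by blast
  define U where "U n = comm (wpow G1 n) (wpow G2 n)" for n
  define V where "V n = comm (wpow H1 n) (wpow H2 n)" for n
  define W where "W n = comm (U n) (V n)" for n
  define L where "L = 2 * (2 * length G1 + 2 * length G2) + 2 * (2 * length H1 + 2 * length H2)"
  define M where "M = nat (\<Sum>r\<in>R. \<bar>J \<phi> r\<bar>)"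
  define C where "C = M + L + 1"
  have key: "n ^ 4 \<le> C * dehn S R (C * n + C)" for n
  proof -
    have gc: "cmpc c (path \<phi> (comm (wpow x n) (wpow y n))) = comm (wpow (cmpc c (path \<phi> x)) n) (wpow (cmpc c (path \<phi> y)) n)" for c x y
      by (simp add: gc_comm gc_wpow)
    have fc: "free_eq (cmpc c (path \<phi> (comm (wpow x n) (wpow y n)))) (comm (wpow (tc c t) n) (wpow (tc c t') n))"
      if "teq (teval \<phi> x) t" "teq (teval \<phi> y) t'" for c x y t t'
      unfolding gc by (intro free_eq_comm free_eq_wpow teqc that)
    have Ua: "free_eq (cmpc Ca (path \<phi> (U n))) (Qw n)"
      using fc[OF G1(2) G2(2), of Ca] by (simp add: U_def Qw_def wpow_single)
    have Ub: "free_eq (cmpc Cb (path \<phi> (U n))) []"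
      using free_eq_trans[OF fc[OF G1(2) G2(2), of Cb, simplified tc.simps wpow_nil] comm_nil1] by (simp add: U_def wpow_nil)
    have Uc: "free_eq (cmpc Cc (path \<phi> (U n))) []"
      using free_eq_trans[OF fc[OF G1(2) G2(2), of Cc, simplified tc.simps wpow_nil] comm_nil2] by (simp add: U_def wpow_nil)
    have Va: "free_eq (cmpc Ca (path \<phi> (V n))) []"
      using free_eq_trans[OF fc[OF H1(2) H2(2), of Ca, simplified tc.simps wpow_nil] comm_nil2] by (simp add: V_def wpow_nil)
    have Vb: "free_eq (cmpc Cb (path \<phi> (V n))) (Qw n)"
      using fc[OF H1(2) H2(2), of Cb] by (simp add: V_def Qw_def wpow_single)
    have Vc: "free_eq (cmpc Cc (path \<phi> (V n))) []"
      using free_eq_trans[OF fc[OF H1(2) H2(2), of Cc, simplified tc.simps wpow_nil] comm_nil1] by (simp add: V_def wpow_nil)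
    have JW: "J \<phi> (W n) = 2 * int n ^ 4"
      unfolding W_def by (rule Jw_value[OF Ua Ub Uc Va Vb Vc])
    have l1: "letters (wpow G1 n) \<subseteq> S" using letters_wpow G1(1) by (rule subset_trans)
    have l2: "letters (wpow G2 n) \<subseteq> S" using letters_wpow G2(1) by (rule subset_trans)
    have l3: "letters (wpow H1 n) \<subseteq> S" using letters_wpow H1(1) by (rule subset_trans)
    have l4: "letters (wpow H2 n) \<subseteq> S" using letters_wpow H2(1) by (rule subset_trans)
    have lW: "letters (W n) \<subseteq> S"
      unfolding W_def U_def V_def letters_comm using l1 l2 l3 l4 by simp
    have lenW: "length (W n) = L * n"
      unfolding W_def U_def V_def L_def by (simp add: length_comm length_wpow algebra_simps)
    have wa: "free_eq (cmpc Ca (path \<phi> (W n))) []"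
      unfolding W_def gc_comm
      using free_eq_trans[OF free_eq_comm[OF Ua Va] comm_nil1] .
    have wb: "free_eq (cmpc Cb (path \<phi> (W n))) []"
      unfolding W_def gc_comm
      using free_eq_trans[OF free_eq_comm[OF Ub Vb] comm_nil2] .
    have wc: "free_eq (cmpc Cc (path \<phi> (W n))) []"
      unfolding W_def gc_comm
      using free_eq_trans[OF free_eq_comm[OF Uc Vc] comm_nil1] .
    have "teq (teval \<phi> (W n)) ([],[],[])"
      unfolding teq_tc
    proof
      fix c show "free_eq (tc c (teval \<phi> (W n))) (tc c ([], [], []))"
        using wa wb wc unfolding cmpc_path_teval[symmetric] tc_zero by (cases c) auto
    qed
    then have np: "null_pres S R (W n)" using pres lW by blast
    obtain cs where cs: "length cs = area S R (W n)" "area_witness S R (W n) cs"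
      using area_witness_ex[OF np] by blast
    have "\<bar>J \<phi> (W n)\<bar> \<le> int (length cs) * (\<Sum>r\<in>R. \<bar>J \<phi> r\<bar>)"
      by (rule J_bound[OF S Rn fR cs(2)])
    then have "2 * int n ^ 4 \<le> int (area S R (W n)) * int M"
      using JW cs(1) unfolding M_def by (simp add: sum_nonneg)
    then have A': "2 * int n ^ 4 \<le> int M * int (area S R (W n))" by (simp add: mult.commute)
    have B: "0 \<le> int n ^ 4" by simp
    have "int n ^ 4 \<le> int M * int (area S R (W n))" using A' B by linarith
    then have "int (n ^ 4) \<le> int (M * area S R (W n))" by simp
    then have 1: "n ^ 4 \<le> M * area S R (W n)" by (simp only: of_nat_le_iff)
    have "length (W n) \<le> C * n + C" unfolding lenW C_def by (simp add: algebra_simps)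
    then have 2: "area S R (W n) \<le> dehn S R (C * n + C)"
      by (rule area_le_dehn[OF fS lW _ np])
    have "M * area S R (W n) \<le> C * dehn S R (C * n + C)"
      using 2 unfolding C_def by (intro mult_mono) auto
    then show ?thesis using 1 by linarith
  qed
  show ?thesis unfolding dehn_dominates_def
  proof (rule exI[of _ C], intro conjI allI)
    show "0 < C" by (simp add: C_def)
  next
    fix N show "N ^ 4 \<le> C * dehn S R (C * N + C) + C * N + C" using key[of N] by linarith
  qed
qed

end
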